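(* Consider $N$ nodes, nodes $1,\dots,N_1$ Byzantine and nodes $N_1+1,\dots,N$ honest. For $k\in\{0,1\}$ and each node $i$, under hypothesis $H_k$ the data $Y_i$ is Gaussian, $Y_i\sim\mathcal N((\mu_{1k})_i,(\sigma_{1k})_i^2)$, where $(\mu_{10})_i=M\sigma_i^2$, $(\mu_{11})_i=(M+\eta_i)\sigma_i^2$, $(\sigma_{10})_i^2=2M\sigma_i^4$, $(\sigma_{11})_i^2=2(M+\eta_i)\sigma_i^4$, with $M>0$, $\sigma_i>0$, $\eta_i\ge0$. Each Byzantine node $i\le N_1$ reports $\tilde Y_i$, which with probability $1-P$ equals $Y_i$ and with probability $P$ equals $Y_i+\Delta_i$ under $H_0$ and $Y_i-\Delta_i$ under $H_1$; set $(\mu_{20})_i=M\sigma_i^2+\Delta_i$, $(\mu_{21})_i=(M+\eta_i)\sigma_i^2-\Delta_i$. Assume all $Y_i$ and all attack decisions are mutually independent. Let $w_{ji}^t$ be the $(j,i)$ entry of $W^t$, where $W=I-\epsilon\,\mathrm{diag}(1/w_1,\dots,1/w_N)L$. Let $U$ be the family of all subsets $A\subseteq\{1,\dots,N_1\}$, $A^c=\{1,\dots,N_1\}\setminus A$, $m_A=|A|$, and $(\mu_k)_A=\sum_{u\in A}w_{ju}^t(\mu_{1k})_u+\sum_{u\in A^c}w_{ju}^t(\mu_{2k})_u$. Let $\tilde\Lambda_j^t=\sum_{i=1}^{N_1}w_{ji}^t\tilde Y_i+\sum_{i=N_1+1}^N w_{ji}^tY_i$, and let node $j$ decide $H_1$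 at iteration $t$ iff $\tilde\Lambda_j^t>\lambda$. Then the probability of detection $P_d^t(j)=\Pr(\tilde\Lambda_j^t>\lambda\mid H_1)$ and the probability of false alarm $P_f^t(j)=\Pr(\tilde\Lambda_j^t>\lambda\mid H_0)$ are $$P_d^t(j)=\sum_{A\in U}P^{N_1-m_A}(1-P)^{m_A}\,Q\!\left(\frac{\lambda-(\mu_1)_A-\sum_{i=N_1+1}^N w_{ji}^t(\mu_{11})_i}{\sqrt{\sum_{i=1}^N (w_{ji}^t(\sigma_{11})_i)^2}}\right),$$ $$P_f^t(j)=\sum_{A\in U}P^{N_1-m_A}(1-P)^{m_A}\,Q\!\left(\frac{\lambda-(\mu_0)_A-\sum_{i=N_1+1}^N w_{ji}^t(\mu_{10})_i}{\sqrt{\sum_{i=1}^N (w_{ji}^t(\sigma_{10})_i)^2}}\right).$$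
   Context: $Q(x)=\Pr(Z>x)$ for $Z\sim\mathcal N(0,1)$. The network is an undirected graph on $N$ nodes with Laplacian $L=D-A$ ($A$ the adjacency matrix, $D$ the diagonal degree matrix), $\epsilon>0$ is the consensus time step and $w_1,\dots,w_N>0$ are the node weights. *)

theory Defs
  imports "HOL-Probability.Probability"
begin

definition Qfun :: "real \<Rightarrow> real" where
  "Qfun x = measure (density lborel std_normal_density) {x<..}"

(* Nodes are indexed 1..N. A is the adjacency matrix of an undirected graph. *)
definition degree :: "nat \<Rightarrow> (nat \<Rightarrow> nat \<Rightarrow> real) \<Rightarrow> nat \<Rightarrow> real" where
  "degree N A i = (\<Sum>k=1..N. A i k)"

definition laplacian :: "nat \<Rightarrow> (nat \<Rightarrow> nat \<Rightarrow> real) \<Rightarrow> nat \<Rightarrow> nat \<Rightarrow> real" where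
  "laplacian N A i j = (if i = j then degree N A i else 0) - A i j"

definition consW :: "nat \<Rightarrow> (nat \<Rightarrow> nat \<Rightarrow> real) \<Rightarrow> real \<Rightarrow> (nat \<Rightarrow> real) \<Rightarrow> nat \<Rightarrow> nat \<Rightarrow> real" where
  "consW N A eps w i j = (if i = j then 1 else 0) - eps * (1 / w i) * laplacian N A i j"

fun matpow :: "nat \<Rightarrow> (nat \<Rightarrow> nat \<Rightarrow> real) \<Rightarrow> nat \<Rightarrow> nat \<Rightarrow> nat \<Rightarrow> real" where
  "matpow N B 0 i j = (if i = j then 1 else 0)"
| "matpow N B (Suc t) i j = (\<Sum>k=1..N. matpow N B t i k * B k j)"

(* hypothesis index k \<in> {0,1} *)
definition mu1 :: "nat \<Rightarrow> real \<Rightarrow> (nat \<Rightarrow> real) \<Rightarrow> (nat \<Rightarrow> real) \<Rightarrow> nat \<Rightarrow> real" where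
  "mu1 k Md sig eta i = (if k = 0 then Md * sig i ^ 2 else (Md + eta i) * sig i ^ 2)"

definition sd1 :: "nat \<Rightarrow> real \<Rightarrow> (nat \<Rightarrow> real) \<Rightarrow> (nat \<Rightarrow> real) \<Rightarrow> nat \<Rightarrow> real" where
  "sd1 k Md sig eta i = (if k = 0 then sqrt (2 * Md * sig i ^ 4) else sqrt (2 * (Md + eta i) * sig i ^ 4))"

definition mu2 :: "nat \<Rightarrow> real \<Rightarrow> (nat \<Rightarrow> real) \<Rightarrow> (nat \<Rightarrow> real) \<Rightarrow> (nat \<Rightarrow> real) \<Rightarrow> nat \<Rightarrow> real" where
  "mu2 k Md sig eta Delta i = (if k = 0 then Md * sig i ^ 2 + Delta i else (Md + eta i) * sig i ^ 2 - Delta i)"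

end

theory Submission
  imports Defs
begin



lemma (in prob_space) gauss_tail:
  fixes I :: "'b set" and X :: "'b \<Rightarrow> 'a \<Rightarrow> real"
  assumes fin: "finite I" and ind: "indep_vars (\<lambda>_. borel) X I"
    and dist: "\<And>i. i\<in>I \<Longrightarrow> distributed M lborel (X i) (normal_density (m i) (s i))"
    and spos: "\<And>i. i\<in>I \<Longrightarrow> s i > 0"
    and vpos: "(\<Sum>i\<in>I. (c i * s i)^2) > 0"
  shows "prob {x\<in>space M. (\<Sum>i\<in>I. c i * X i x) + d > lam}
       = Qfun ((lam - d - (\<Sum>i\<in>I. c i * m i)) / sqrt (\<Sum>i\<in>I. (c i * s i)^2))"
proof -
  define I' where "I' = {i\<in>I. c i \<noteq> 0}"
  have fin': "finite I'" using fin by (simp add: I'_def)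
  have sub: "I' \<subseteq> I" by (auto simp: I'_def)
  have ne: "I' \<noteq> {}"
  proof
    assume "I' = {}"
    then have "\<forall>i\<in>I. c i = 0" by (auto simp: I'_def)
    then have "(\<Sum>i\<in>I. (c i * s i)^2) = 0" by simp
    with vpos show False by simp
  qed
  have ind': "indep_vars (\<lambda>_. borel) (\<lambda>i x. c i * X i x) I'"
    using indep_vars_compose2[OF indep_vars_subset[OF ind sub], of "\<lambda>i y. c i * y" "\<lambda>_. borel"]
    by auto
  have d': "distributed M lborel (\<lambda>x. c i * X i x) (normal_density (c i * m i) (\<bar>c i\<bar> * s i))"
    if "i \<in> I'" for i
  proof -
    have i: "i \<in> I" "c i \<noteq> 0" using that by (auto simp: I'_def)
    show ?thesis using normal_density_affine[OF dist[OF i(1)] spos[OF i(1)] i(2), of 0] by simp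
  qed
  have Z: "distributed M lborel (\<lambda>x. \<Sum>i\<in>I'. c i * X i x)
      (normal_density (\<Sum>i\<in>I'. c i * m i) (sqrt (\<Sum>i\<in>I'. (\<bar>c i\<bar> * s i)^2)))"
    by (rule sum_indep_normal[OF fin' ne ind']) (use spos d' in \<open>auto simp: I'_def\<close>)
  have e1: "(\<Sum>i\<in>I'. c i * X i x) = (\<Sum>i\<in>I. c i * X i x)" for x
    by (rule sum.mono_neutral_left[OF fin sub]) (auto simp: I'_def)
  have e2: "(\<Sum>i\<in>I'. c i * m i) = (\<Sum>i\<in>I. c i * m i)"
    by (rule sum.mono_neutral_left[OF fin sub]) (auto simp: I'_def)
  have e3: "(\<Sum>i\<in>I'. (\<bar>c i\<bar> * s i)^2) = (\<Sum>i\<in>I. (c i * s i)^2)"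
    unfolding power_mult_distrib power2_abs by (rule sum.mono_neutral_left[OF fin sub]) (auto simp: I'_def power_mult_distrib)
  define \<mu> where "\<mu> = (\<Sum>i\<in>I. c i * m i)"
  define \<sigma> where "\<sigma> = sqrt (\<Sum>i\<in>I. (c i * s i)^2)"
  define Zf where "Zf = (\<lambda>x. \<Sum>i\<in>I. c i * X i x)"
  have sp: "\<sigma> > 0" using vpos by (simp add: \<sigma>_def)
  have Z2: "distributed M lborel Zf (normal_density \<mu> \<sigma>)"
    using Z by (simp add: e1 e2 e3 \<mu>_def \<sigma>_def Zf_def)
  have W: "distributed M lborel (\<lambda>x. (Zf x - \<mu>) / \<sigma>) std_normal_density"
    using Z2 normal_standard_normal_convert[OF sp] by simp
  have seteq: "{x\<in>space M. Zf x + d > lam} = (\<lambda>x. (Zf x - \<mu>) / \<sigma>) -` {(lam - d - \<mu>)/\<sigma><..} \<inter> space M"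
    using sp by (auto simp: divide_less_cancel field_simps)
  have "prob ((\<lambda>x. (Zf x - \<mu>) / \<sigma>) -` {(lam - d - \<mu>)/\<sigma><..} \<inter> space M)
      = measure (distr M lborel (\<lambda>x. (Zf x - \<mu>) / \<sigma>)) {(lam - d - \<mu>)/\<sigma><..}"
    by (rule measure_distr[symmetric]) (use W in \<open>auto dest: distributed_measurable\<close>)
  also have "\<dots> = Qfun ((lam - d - \<mu>)/\<sigma>)"
    unfolding Qfun_def using W by (simp add: distributed_distr_eq_density)
  finally show ?thesis using seteq by (simp add: Zf_def \<mu>_def \<sigma>_def)
qed



lemma matpow_rowsum:
  assumes "\<forall>i\<in>{1..N}. (\<Sum>j=1..N. B i j) = 1" and "i \<in> {1..N}"
  shows "(\<Sum>j=1..N. matpow N B t i j) = 1"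
  using assms(2)
proof (induction t arbitrary: i)
  case 0
  then show ?case by (simp add: sum.delta)
next
  case (Suc t)
  have "(\<Sum>j=1..N. matpow N B (Suc t) i j) = (\<Sum>j=1..N. \<Sum>k=1..N. matpow N B t i k * B k j)" by simp
  also have "\<dots> = (\<Sum>k=1..N. \<Sum>j=1..N. matpow N B t i k * B k j)" by (rule sum.swap)
  also have "\<dots> = (\<Sum>k=1..N. matpow N B t i k * (\<Sum>j=1..N. B k j))" by (simp add: sum_distrib_left)
  also have "\<dots> = (\<Sum>k=1..N. matpow N B t i k)" using assms(1) by simp
  also have "\<dots> = 1" using Suc by simp
  finally show ?case .
qed

lemma consW_rowsum:
  assumes "i \<in> {1..N}"
  shows "(\<Sum>j=1..N. consW N A eps w i j) = 1"
proof -
  have L: "(\<Sum>j=1..N. laplacian N A i j) = 0"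
    using assms by (simp add: laplacian_def sum_subtractf sum.delta degree_def)
  have "(\<Sum>j=1..N. consW N A eps w i j) = (\<Sum>j=1..N. (if i = j then 1 else 0)) - eps * (1 / w i) * (\<Sum>j=1..N. laplacian N A i j)"
    by (simp add: consW_def sum_subtractf sum_distrib_left)
  also have "\<dots> = 1" using assms L by (simp add: sum.delta)
  finally show ?thesis .
qed

theorem proposition1:
  fixes Pr :: "'a measure"
    and N N1 j t k :: nat
    and A :: "nat \<Rightarrow> nat \<Rightarrow> real"
    and eps :: real and w :: "nat \<Rightarrow> real"
    and Md :: real and sig eta Delta :: "nat \<Rightarrow> real"
    and P lam :: real
    and Y :: "nat \<Rightarrow> 'a \<Rightarrow> real"
    and B :: "nat \<Rightarrow> 'a \<Rightarrow> bool"
  assumes "prob_space Pr"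
    and adj01: "\<forall>u\<in>{1..N}. \<forall>v\<in>{1..N}. A u v = 0 \<or> A u v = 1"
    and adj_sym: "\<forall>u\<in>{1..N}. \<forall>v\<in>{1..N}. A u v = A v u"
    and adj_irrefl: "\<forall>u\<in>{1..N}. A u u = 0"
    and "eps > 0" and "\<forall>i\<in>{1..N}. w i > 0"
    and "Md > 0" and "\<forall>i\<in>{1..N}. sig i > 0" and "\<forall>i\<in>{1..N}. eta i \<ge> 0"
    and "N1 \<le> N" and "j \<in> {1..N}"
    and "0 \<le> P" and "P \<le> 1"
    and "k \<in> {0, 1}"
    and Ydist: "\<forall>i\<in>{1..N}. distributed Pr lborel (Y i)
                   (normal_density (mu1 k Md sig eta i) (sd1 k Md sig eta i))"
    and Bev: "\<forall>i\<in>{1..N1}. {x \<in> space Pr. B i x} \<in> sets Pr"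
    and Bprob: "\<forall>i\<in>{1..N1}. measure Pr {x \<in> space Pr. B i x} = P"
    and indep: "prob_space.indep_vars Pr (\<lambda>_. borel)
                  (\<lambda>z. case z of Inl i \<Rightarrow> Y i | Inr i \<Rightarrow> (\<lambda>x. if B i x then 1 else 0))
                  (Inl ` {1..N} \<union> Inr ` {1..N1})"
  shows "measure Pr {x \<in> space Pr.
            (\<Sum>i=1..N1. matpow N (consW N A eps w) t j i *
                 (if B i x then Y i x + (if k = 0 then Delta i else - Delta i) else Y i x))
          + (\<Sum>i=N1+1..N. matpow N (consW N A eps w) t j i * Y i x) > lam}
       = (\<Sum>S\<in>Pow {1..N1}. P ^ (N1 - card S) * (1 - P) ^ card S *
            Qfun ((lam
                   - ((\<Sum>u\<in>S. matpow N (consW N A eps w) t j u * mu1 k Md sig eta u)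
                      + (\<Sum>u\<in>{1..N1} - S. matpow N (consW N A eps w) t j u * mu2 k Md sig eta Delta u))
                   - (\<Sum>i=N1+1..N. matpow N (consW N A eps w) t j i * mu1 k Md sig eta i))
                  / sqrt (\<Sum>i=1..N. (matpow N (consW N A eps w) t j i * sd1 k Md sig eta i) ^ 2)))"
proof -
  interpret prob_space Pr by fact
  define c where "c = (\<lambda>i. matpow N (consW N A eps w) t j i)"
  define \<delta> where "\<delta> = (\<lambda>i. if k = 0 then Delta i else - Delta i)"
  define Xv where "Xv = (\<lambda>z. case z of Inl i \<Rightarrow> Y i | Inr i \<Rightarrow> (\<lambda>x. if B i x then 1 else (0::real)))"
  define E where "E = (\<lambda>S. {x\<in>space Pr. \<forall>i\<in>{1..N1}. B i x \<longleftrightarrow> i \<notin> S})"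
  define dS where "dS = (\<lambda>S. \<Sum>i\<in>{1..N1}-S. c i * \<delta> i)"
  define F where "F = (\<lambda>S. {x\<in>space Pr. (\<Sum>i\<in>{1..N}. c i * Y i x) + dS S > lam})"
  define Lam where "Lam = (\<lambda>x. (\<Sum>i=1..N1. c i * (if B i x then Y i x + \<delta> i else Y i x)) + (\<Sum>i=N1+1..N. c i * Y i x))"
  define K where "K = (Inl ` {1..N} :: (nat + nat) set)"
  define L where "L = (Inr ` {1..N1} :: (nat + nat) set)"
  define V1 where "V1 = (\<lambda>\<omega>. restrict (\<lambda>z. Xv z \<omega>) K)"
  define V2 where "V2 = (\<lambda>\<omega>. restrict (\<lambda>z. Xv z \<omega>) L)"
  note indX = indep[folded Xv_def]
  have splitN: "{1..N} = {1..N1} \<union> {N1+1..N}" using \<open>N1 \<le> N\<close> by auto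
  have LamE: "Lam x = (\<Sum>i\<in>{1..N}. c i * Y i x) + dS S" if "x \<in> E S" for x S
  proof -
    have fl: "{i\<in>{1..N1}. B i x} = {1..N1} - S" using that by (auto simp: E_def)
    have "(\<Sum>i=1..N1. c i * (if B i x then Y i x + \<delta> i else Y i x))
        = (\<Sum>i=1..N1. c i * Y i x + (if B i x then c i * \<delta> i else 0))"
      by (rule sum.cong) (auto simp: algebra_simps)
    also have "\<dots> = (\<Sum>i=1..N1. c i * Y i x) + (\<Sum>i=1..N1. (if B i x then c i * \<delta> i else 0))"
      by (simp add: sum.distrib)
    also have "(\<Sum>i=1..N1. (if B i x then c i * \<delta> i else 0)) = dS S"
      unfolding dS_def fl[symmetric] by (rule sum.inter_filter[symmetric]) simp
    finally show ?thesis unfolding Lam_def splitN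
      by (subst sum.union_disjoint) auto
  qed
  have IV: "indep_var (PiM K (\<lambda>_. borel)) V1 (PiM L (\<lambda>_. borel)) V2"
    unfolding V1_def V2_def by (rule indep_var_restrict[OF indX]) (auto simp: K_def L_def)
  have rv1: "random_variable (PiM K (\<lambda>_. borel)) V1" using indep_var_rv1[OF IV] .
  have rv2: "random_variable (PiM L (\<lambda>_. borel)) V2" using indep_var_rv2[OF IV] .
  have V1v: "V1 x (Inl i) = Y i x" if "i \<in> {1..N}" for x i
    using that by (simp add: V1_def K_def Xv_def)
  have V2v: "V2 x (Inr i) = (if B i x then 1 else 0)" if "i \<in> {1..N1}" for x i
    using that by (simp add: V2_def L_def Xv_def)
  define Ga where "Ga = (\<lambda>S. {v\<in>space (PiM K (\<lambda>_. borel)). (\<Sum>i\<in>{1..N}. c i * v (Inl i)) + dS S > lam})"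
  define Gb where "Gb = (\<lambda>S. {v\<in>space (PiM L (\<lambda>_. borel)). \<forall>i\<in>{1..N1}. v (Inr i) = (if i \<in> S then 0 else (1::real))})"
  have Ga_sets: "Ga S \<in> sets (PiM K (\<lambda>_. borel))" for S
  proof -
    have m: "(\<lambda>v. (\<Sum>i\<in>{1..N}. c i * v (Inl i)) + dS S) \<in> borel_measurable (PiM K (\<lambda>_. borel))"
      by (intro borel_measurable_add borel_measurable_sum borel_measurable_times measurable_const
          measurable_component_singleton) (auto simp: K_def)
    have "Ga S = (\<lambda>v. (\<Sum>i\<in>{1..N}. c i * v (Inl i)) + dS S) -` {lam<..} \<inter> space (PiM K (\<lambda>_. borel))"
      by (auto simp: Ga_def)
    also have "\<dots> \<in> sets (PiM K (\<lambda>_. borel))" by (rule measurable_sets[OF m]) simp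
    finally show ?thesis .
  qed
  have Gb_sets: "Gb S \<in> sets (PiM L (\<lambda>_. borel))" for S
    unfolding Gb_def
  proof (rule sets.sets_Collect_finite_All)
    fix i assume i: "i \<in> {1..N1}"
    have m: "(\<lambda>v. v (Inr i)) \<in> borel_measurable (PiM L (\<lambda>_. borel))"
      by (rule measurable_component_singleton) (use i in \<open>auto simp: L_def\<close>)
    have "{v\<in>space (PiM L (\<lambda>_. borel)). v (Inr i) = (if i \<in> S then 0 else (1::real))}
        = (\<lambda>v. v (Inr i)) -` {if i \<in> S then 0 else 1} \<inter> space (PiM L (\<lambda>_. borel))" by auto
    also have "\<dots> \<in> sets (PiM L (\<lambda>_. borel))" by (rule measurable_sets[OF m]) simp
    finally show "{v\<in>space (PiM L (\<lambda>_. borel)). v (Inr i) = (if i \<in> S then 0 else (1::real))} \<in> sets (PiM L (\<lambda>_. borel))" .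
  qed simp
  have Feq: "F S = V1 -` Ga S \<inter> space Pr" for S
    using measurable_space[OF rv1] by (auto simp: F_def Ga_def V1v)
  have Eeq: "E S = V2 -` Gb S \<inter> space Pr" for S
    using measurable_space[OF rv2] by (auto simp: E_def Gb_def V2v split: if_splits)
  have EFeq: "E S \<inter> F S = (\<lambda>x. (V1 x, V2 x)) -` (Ga S \<times> Gb S) \<inter> space Pr" for S
    unfolding Eeq Feq by auto
  have F_sets: "F S \<in> sets Pr" for S unfolding Feq by (rule measurable_sets[OF rv1 Ga_sets])
  have E_sets: "E S \<in> sets Pr" for S unfolding Eeq by (rule measurable_sets[OF rv2 Gb_sets])
  have PEF: "prob (E S \<inter> F S) = prob (E S) * prob (F S)" for S
    unfolding EFeq using indep_varD[OF IV Ga_sets Gb_sets] by (simp add: Eeq Feq)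
  have Ymeas: "Y i \<in> borel_measurable Pr" if "i \<in> {1..N}" for i
    using Ydist that by (auto dest!: distributed_measurable simp: measurable_lborel2)
  have sdpos: "sd1 k Md sig eta i > 0" if "i \<in> {1..N}" for i
  proof -
    have "sig i > 0" "eta i \<ge> 0" using that assms by auto
    then have "sig i ^ 4 > 0" by simp
    then show ?thesis using \<open>Md > 0\<close> \<open>eta i \<ge> 0\<close> by (auto simp: sd1_def)
  qed
  have rs: "(\<Sum>i=1..N. c i) = 1"
    unfolding c_def by (rule matpow_rowsum) (use consW_rowsum \<open>j \<in> {1..N}\<close> in auto)
  obtain i0 where i0: "i0 \<in> {1..N}" "c i0 \<noteq> 0"
  proof (rule ccontr)
    assume "\<not> thesis"
    then have "\<forall>i\<in>{1..N}. c i = 0" using that by blast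
    then have "(\<Sum>i=1..N. c i) = 0" by simp
    with rs show False by simp
  qed
  have vpos: "(\<Sum>i=1..N. (c i * sd1 k Md sig eta i)^2) > 0"
  proof -
    have "0 < (c i0 * sd1 k Md sig eta i0)^2" using i0 sdpos[OF i0(1)] by simp
    also have "\<dots> \<le> (\<Sum>i=1..N. (c i * sd1 k Md sig eta i)^2)"
      by (rule member_le_sum) (use i0 in auto)
    finally show ?thesis .
  qed
  have PF: "prob (F S) = Qfun ((lam - dS S - (\<Sum>i=1..N. c i * mu1 k Md sig eta i))
                 / sqrt (\<Sum>i=1..N. (c i * sd1 k Md sig eta i)^2))" for S
  proof -
    have indK: "indep_vars (\<lambda>_. borel) Xv K" by (rule indep_vars_subset[OF indX]) (auto simp: K_def)
    have g: "prob {x\<in>space Pr. (\<Sum>z\<in>K. c (projl z) * Xv z x) + dS S > lam}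
       = Qfun ((lam - dS S - (\<Sum>z\<in>K. c (projl z) * mu1 k Md sig eta (projl z)))
           / sqrt (\<Sum>z\<in>K. (c (projl z) * sd1 k Md sig eta (projl z))^2))"
    proof (rule gauss_tail[OF _ indK])
      show "finite K" by (simp add: K_def)
      show "distributed Pr lborel (Xv z) (normal_density (mu1 k Md sig eta (projl z)) (sd1 k Md sig eta (projl z)))"
        if "z \<in> K" for z using that Ydist by (auto simp: K_def Xv_def)
      show "0 < sd1 k Md sig eta (projl z)" if "z \<in> K" for z using that sdpos by (auto simp: K_def)
      show "0 < (\<Sum>z\<in>K. (c (projl z) * sd1 k Md sig eta (projl z))^2)"
        using vpos by (simp add: K_def sum.reindex inj_on_def)
    qed
    then show ?thesis by (simp add: K_def sum.reindex inj_on_def F_def Xv_def)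
  qed
  have PE: "prob (E S) = P ^ (N1 - card S) * (1 - P) ^ card S" if S: "S \<subseteq> {1..N1}" for S
  proof (cases "N1 = 0")
    case True
    then have "S = {}" "E S = space Pr" using S by (auto simp: E_def)
    then show ?thesis using True prob_space by simp
  next
    case False
    define Af where "Af = (\<lambda>z::nat+nat. {if projr z \<in> S then 0 else (1::real)})"
    have "prob (\<Inter>z\<in>L. Xv z -` Af z \<inter> space Pr) = (\<Prod>z\<in>L. prob (Xv z -` Af z \<inter> space Pr))"
      by (rule indep_varsD[OF indX]) (use False in \<open>auto simp: L_def Af_def\<close>)
    moreover have "(\<Inter>z\<in>L. Xv z -` Af z \<inter> space Pr) = E S"
      using False by (auto simp: L_def Af_def Xv_def E_def split: if_splits)
    moreover have "(\<Prod>z\<in>L. prob (Xv z -` Af z \<inter> space Pr)) = (\<Prod>i\<in>{1..N1}. if i \<in> S then 1 - P else P)"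
    proof -
      have "(\<Prod>z\<in>L. prob (Xv z -` Af z \<inter> space Pr)) = (\<Prod>i\<in>{1..N1}. prob (Xv (Inr i) -` Af (Inr i) \<inter> space Pr))"
        by (simp add: L_def prod.reindex inj_on_def)
      also have "\<dots> = (\<Prod>i\<in>{1..N1}. if i \<in> S then 1 - P else P)"
      proof (rule prod.cong)
        fix i assume i: "i \<in> {1..N1}"
        show "prob (Xv (Inr i) -` Af (Inr i) \<inter> space Pr) = (if i \<in> S then 1 - P else P)"
        proof (cases "i \<in> S")
          case True
          have "Xv (Inr i) -` Af (Inr i) \<inter> space Pr = space Pr - {x\<in>space Pr. B i x}"
            using True by (auto simp: Xv_def Af_def split: if_splits)
          then show ?thesis using True prob_compl[of "{x\<in>space Pr. B i x}"] Bev Bprob i by simp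
        next
          case False
          have "Xv (Inr i) -` Af (Inr i) \<inter> space Pr = {x\<in>space Pr. B i x}"
            using False by (auto simp: Xv_def Af_def split: if_splits)
          then show ?thesis using False Bprob i by simp
        qed
      qed simp
      finally show ?thesis .
    qed
    moreover have "(\<Prod>i\<in>{1..N1}. if i \<in> S then 1 - P else P) = P ^ (N1 - card S) * (1 - P) ^ card S"
    proof -
      have f: "finite S" using S finite_subset by blast
      have "{1..N1} \<inter> {x. x \<in> S} = S" "{1..N1} \<inter> - {x. x \<in> S} = {1..N1} - S" using S by auto
      moreover have "card ({1..N1} - S) = N1 - card S" using S f by (simp add: card_Diff_subset)
      ultimately show ?thesis by (simp add: prod.If_cases)
    qed
    ultimately show ?thesis by simp
  qed
  have U: "{x\<in>space Pr. Lam x > lam} = (\<Union>S\<in>Pow {1..N1}. E S \<inter> F S)"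
  proof (intro equalityI subsetI)
    fix x assume x: "x \<in> {x\<in>space Pr. Lam x > lam}"
    define S where "S = {i\<in>{1..N1}. \<not> B i x}"
    have xE: "x \<in> E S" using x by (auto simp: E_def S_def)
    then have "x \<in> F S" using x LamE[OF xE] by (auto simp: F_def)
    moreover have "S \<in> Pow {1..N1}" by (auto simp: S_def)
    ultimately show "x \<in> (\<Union>S\<in>Pow {1..N1}. E S \<inter> F S)" using xE by blast
  next
    fix x assume "x \<in> (\<Union>S\<in>Pow {1..N1}. E S \<inter> F S)"
    then obtain S where xs: "x \<in> E S" "x \<in> F S" by blast
    then show "x \<in> {x\<in>space Pr. Lam x > lam}" using LamE[OF xs(1)] by (auto simp: F_def)
  qed
  have disj: "disjoint_family_on (\<lambda>S. E S \<inter> F S) (Pow {1..N1})"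
    unfolding disjoint_family_on_def
  proof (intro ballI impI)
    fix S S' assume S: "S \<in> Pow {1..N1}" "S' \<in> Pow {1..N1}" "S \<noteq> S'"
    show "(E S \<inter> F S) \<inter> (E S' \<inter> F S') = {}"
    proof (rule ccontr)
      assume "(E S \<inter> F S) \<inter> (E S' \<inter> F S') \<noteq> {}"
      then obtain x where "x \<in> E S" "x \<in> E S'" by blast
      then have "\<forall>i\<in>{1..N1}. i \<in> S \<longleftrightarrow> i \<in> S'" by (auto simp: E_def)
      with S have "S = S'" by blast
      with S show False by simp
    qed
  qed
  have "measure Pr {x\<in>space Pr. Lam x > lam} = (\<Sum>S\<in>Pow {1..N1}. prob (E S \<inter> F S))"
    unfolding U by (rule finite_measure_finite_Union) (use disj E_sets F_sets in auto)
  also have "\<dots> = (\<Sum>S\<in>Pow {1..N1}. P ^ (N1 - card S) * (1 - P) ^ card S *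
            Qfun ((lam
                   - ((\<Sum>u\<in>S. c u * mu1 k Md sig eta u)
                      + (\<Sum>u\<in>{1..N1} - S. c u * mu2 k Md sig eta Delta u))
                   - (\<Sum>i=N1+1..N. c i * mu1 k Md sig eta i))
                  / sqrt (\<Sum>i=1..N. (c i * sd1 k Md sig eta i) ^ 2)))"
  proof (rule sum.cong[OF refl])
    fix S assume "S \<in> Pow {1..N1}"
    then have S: "S \<subseteq> {1..N1}" by simp
    have m2: "mu2 k Md sig eta Delta u = mu1 k Md sig eta u + \<delta> u" for u
      by (simp add: mu1_def mu2_def \<delta>_def)
    have r: "(\<Sum>u\<in>{1..N1} - S. c u * mu2 k Md sig eta Delta u)
           = (\<Sum>u\<in>{1..N1} - S. c u * mu1 k Md sig eta u) + dS S"
      by (simp add: m2 dS_def distrib_left sum.distrib)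
    have s1: "(\<Sum>u\<in>{1..N1}. c u * mu1 k Md sig eta u)
           = (\<Sum>u\<in>{1..N1} - S. c u * mu1 k Md sig eta u) + (\<Sum>u\<in>S. c u * mu1 k Md sig eta u)"
      by (rule sum.subset_diff[OF S]) simp
    have s2: "(\<Sum>i=1..N. c i * mu1 k Md sig eta i)
           = (\<Sum>u\<in>{1..N1}. c u * mu1 k Md sig eta u) + (\<Sum>i=N1+1..N. c i * mu1 k Md sig eta i)"
      unfolding splitN by (subst sum.union_disjoint) auto
    have arg: "lam - dS S - (\<Sum>i=1..N. c i * mu1 k Md sig eta i)
        = lam - ((\<Sum>u\<in>S. c u * mu1 k Md sig eta u)
                      + (\<Sum>u\<in>{1..N1} - S. c u * mu2 k Md sig eta Delta u))
                   - (\<Sum>i=N1+1..N. c i * mu1 k Md sig eta i)"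
      unfolding r s2 s1 by simp
    show "prob (E S \<inter> F S) = P ^ (N1 - card S) * (1 - P) ^ card S *
            Qfun ((lam
                   - ((\<Sum>u\<in>S. c u * mu1 k Md sig eta u)
                      + (\<Sum>u\<in>{1..N1} - S. c u * mu2 k Md sig eta Delta u))
                   - (\<Sum>i=N1+1..N. c i * mu1 k Md sig eta i))
                  / sqrt (\<Sum>i=1..N. (c i * sd1 k Md sig eta i) ^ 2))"
      unfolding PEF PE[OF S] PF arg ..
  qed
  finally show ?thesis unfolding Lam_def c_def \<delta>_def .
qed

end
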